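(* Let $S,T\subseteq\mathbb{Z}_{>0}$ be finite with $T\preceq S$, and let $x\in T$ be such that $T\setminus\{x\}\preceq S$. Then $(T\triangleleft S)(i)\ge((T\setminus\{x\})\triangleleft S)(i)$ for all $i\in[|S|]$.
   Context: For a finite set $S\subseteq\mathbb{Z}_{>0}$, $S(i)$ denotes its $i$th smallest element. $T\preceq S$ means $|T|\ge|S|$ and $T(i)<S(i)$ for all $i\in[|S|]$. For finite $S,T$, $T\triangleleft S$ is computed by going through $S$ from largest to smallest; each $s$ picks the largest element of $T$ less than $s$ not yet picked (if one exists); $T\triangleleft S$ is the set of picked elements. *)

theory Defs
  imports Main
begin

definition kth :: "nat set \<Rightarrow> nat \<Rightarrow> nat" where
  "kth S i = sorted_list_of_set S ! (i - 1)"

definition preceq :: "nat set \<Rightarrow> nat set \<Rightarrow> bool" where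
  "preceq T S \<longleftrightarrow> card T \<ge> card S \<and> (\<forall>i\<in>{1..card S}. kth T i < kth S i)"

fun pick :: "nat list \<Rightarrow> nat set \<Rightarrow> nat set" where
  "pick [] A = {}"
| "pick (s # ss) A =
     (if \<exists>t\<in>A. t < s
      then (let t = Max {t\<in>A. t < s} in insert t (pick ss (A - {t})))
      else pick ss A)"

definition tri :: "nat set \<Rightarrow> nat set \<Rightarrow> nat set" where
  "tri T S = pick (rev (sorted_list_of_set S)) T"

end

theory Submission
  imports Defs
begin

lemma fin_below: "finite {t\<in>A. t < (s::nat)}"
  by (rule finite_subset[of _ "{..<s}"]) auto

lemma pick_subset: "pick ss A \<subseteq> A"
proof (induction ss arbitrary: A)
  case Nil then show ?case by simp
next
  case (Cons s ss)
  show ?case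
  proof (cases "\<exists>t\<in>A. t < s")
    case True
    define M where "M = Max {t\<in>A. t < s}"
    have "M \<in> {t\<in>A. t < s}" unfolding M_def using True fin_below by (intro Max_in) auto
    then show ?thesis using True Cons.IH[of "A - {M}"] by (auto simp: Let_def M_def[symmetric])
  next
    case False then show ?thesis using Cons.IH[of A] by simp
  qed
qed

lemma pick_finite: "finite (pick ss A)"
proof (induction ss arbitrary: A)
  case (Cons s ss) then show ?case by (simp add: Let_def)
qed simp

lemma pick_remove:
  "x \<in> A \<Longrightarrow> pick ss (A - {x}) = pick ss A - {x} \<or>
     (\<exists>y<x. y \<in> A \<and> y \<notin> pick ss A \<and> x \<in> pick ss A \<and> pick ss (A - {x}) = insert y (pick ss A - {x}))"
proof (induction ss arbitrary: A x)
  case Nil then show ?case by simp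
next
  case (Cons s ss)
  show ?case
  proof (cases "\<exists>t\<in>A. t < s")
    case False
    then have F2: "\<not> (\<exists>t\<in>A - {x}. t < s)" by auto
    show ?thesis using Cons.IH[OF Cons.prems] False F2 by simp
  next
    case True
    define M where "M = Max {t\<in>A. t < s}"
    have Min: "M \<in> {t\<in>A. t < s}" unfolding M_def using True fin_below by (intro Max_in) auto
    have Mge: "\<And>t. t \<in> A \<Longrightarrow> t < s \<Longrightarrow> t \<le> M" unfolding M_def using fin_below by (intro Max_ge) auto
    have PA: "pick (s#ss) A = insert M (pick ss (A - {M}))" using True by (simp add: Let_def M_def)
    show ?thesis
    proof (cases "M = x")
      case False
      have T2: "\<exists>t\<in>A - {x}. t < s" using Min False by auto
      have "Max {t\<in>A - {x}. t < s} = M"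
        using Min False Mge fin_below by (intro Max_eqI) auto
      then have PB: "pick (s#ss) (A - {x}) = insert M (pick ss ((A - {M}) - {x}))"
        using T2 by (simp add: Let_def Diff_insert2[symmetric] insert_commute)
      have xin: "x \<in> A - {M}" using Cons.prems False by auto
      from Cons.IH[OF xin] show ?thesis
      proof
        assume h: "pick ss (A - {M} - {x}) = pick ss (A - {M}) - {x}"
        show ?thesis using h PA PB False by auto
      next
        assume "\<exists>y<x. y \<in> A - {M} \<and> y \<notin> pick ss (A - {M}) \<and> x \<in> pick ss (A - {M}) \<and>
            pick ss (A - {M} - {x}) = insert y (pick ss (A - {M}) - {x})"
        then obtain y where y: "y < x" "y \<in> A - {M}" "y \<notin> pick ss (A - {M})" "x \<in> pick ss (A - {M})"
          "pick ss (A - {M} - {x}) = insert y (pick ss (A - {M}) - {x})" by blast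
        show ?thesis
          apply (rule disjI2) apply (rule exI[of _ y])
          using y PA PB False by auto
      qed
    next
      case Mx: True
      define B where "B = A - {x}"
      have xnB: "x \<notin> pick ss B" using pick_subset[of ss B] B_def by auto
      have PA': "pick (s#ss) A = insert x (pick ss B)" using PA Mx B_def by simp
      show ?thesis
      proof (cases "\<exists>t\<in>B. t < s")
        case False
        then have "pick (s#ss) (A - {x}) = pick ss B" using B_def by simp
        then show ?thesis using PA' xnB by auto
      next
        case True2: True
        define M' where "M' = Max {t\<in>B. t < s}"
        have M'in: "M' \<in> {t\<in>B. t < s}" unfolding M'_def using True2 fin_below by (intro Max_in) auto
        have M'x: "M' < x" using M'in Mge[of M'] Mx B_def by fastforce
        have PB: "pick (s#ss) (A - {x}) = insert M' (pick ss (B - {M'}))"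
          using True2 by (simp add: Let_def M'_def B_def)
        have M'B: "M' \<in> B" using M'in by auto
        from Cons.IH[OF M'B] show ?thesis
        proof
          assume h: "pick ss (B - {M'}) = pick ss B - {M'}"
          show ?thesis
          proof (cases "M' \<in> pick ss B")
            case True
            then have "pick (s#ss) (A - {x}) = pick ss B" using PB h by auto
            then show ?thesis using PA' xnB by auto
          next
            case False
            show ?thesis
              apply (rule disjI2) apply (rule exI[of _ M'])
              using False PB PA' h M'x M'B B_def xnB by auto
          qed
        next
          assume "\<exists>y<M'. y \<in> B \<and> y \<notin> pick ss B \<and> M' \<in> pick ss B \<and>
            pick ss (B - {M'}) = insert y (pick ss B - {M'})"
          then obtain y where y: "y < M'" "y \<in> B" "y \<notin> pick ss B" "M' \<in> pick ss B"
            "pick ss (B - {M'}) = insert y (pick ss B - {M'})" by blast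
          show ?thesis
            apply (rule disjI2) apply (rule exI[of _ y])
            using y PB PA' M'x B_def xnB by auto
        qed
      qed
    qed
  qed
qed

lemma pick_card:
  "sorted_wrt (>) ss \<Longrightarrow> \<forall>k<length ss. length ss - k \<le> card {a\<in>A. a < ss!k}
   \<Longrightarrow> card (pick ss A) = length ss"
proof (induction ss arbitrary: A)
  case Nil then show ?case by simp
next
  case (Cons s ss)
  have "Suc (length ss) \<le> card {a\<in>A. a < s}" using Cons.prems(2) by force
  then have "0 < card {a\<in>A. a < s}" by simp
  then have "{a\<in>A. a < s} \<noteq> {}" using card_gt_0_iff by blast
  then have True: "\<exists>t\<in>A. t < s" by auto
  define M where "M = Max {t\<in>A. t < s}"
  have Min: "M \<in> {t\<in>A. t < s}" unfolding M_def using True fin_below by (intro Max_in) auto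
  have Mge: "\<And>t. t \<in> A \<Longrightarrow> t < s \<Longrightarrow> t \<le> M" unfolding M_def using fin_below by (intro Max_ge) auto
  have PA: "pick (s#ss) A = insert M (pick ss (A - {M}))" using True by (simp add: Let_def M_def)
  have nM: "M \<notin> pick ss (A - {M})" using pick_subset by blast
  have cs: "Suc (length ss) \<le> card {a\<in>A. a < s}" by fact
  have "\<forall>k<length ss. length ss - k \<le> card {a\<in>A - {M}. a < ss!k}"
  proof (intro allI impI)
    fix k assume k: "k < length ss"
    have hk: "length ss - k \<le> card {a\<in>A. a < ss!k}" using Cons.prems(2) k by force
    have lt: "ss!k < s" using Cons.prems(1) k by simp
    show "length ss - k \<le> card {a\<in>A - {M}. a < ss!k}"
    proof (cases "M < ss!k")
      case True
      have e: "{a\<in>A - {M}. a < ss!k} = {a\<in>A. a < s} - {M}"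
        using True lt Mge by fastforce
      have "card ({a\<in>A. a < s} - {M}) = card {a\<in>A. a < s} - 1"
        using Min fin_below by (simp add: card_Diff_singleton)
      then show ?thesis using e cs by simp
    next
      case False
      have "{a\<in>A - {M}. a < ss!k} = {a\<in>A. a < ss!k}" using False by auto
      then show ?thesis using hk by simp
    qed
  qed
  then have "card (pick ss (A - {M})) = length ss" using Cons.IH Cons.prems(1) by simp
  then show ?case using PA nM pick_finite by simp
qed

lemma kth_L1:
  assumes "finite A" "1 \<le> i" "i \<le> card A"
  shows "i \<le> card {a\<in>A. a \<le> kth A i}"
proof -
  define xs where "xs = sorted_list_of_set A"
  have len: "length xs = card A" and dis: "distinct xs" and so: "sorted xs" and st: "set xs = A"
    using assms(1) by (auto simp: xs_def)
  have il: "i - 1 < length xs" using assms len by simp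
  have "set (take i xs) \<subseteq> {a\<in>A. a \<le> kth A i}"
  proof
    fix a assume "a \<in> set (take i xs)"
    then obtain k where k: "k < length (take i xs)" "a = take i xs ! k" by (auto simp: in_set_conv_nth)
    then have ak: "a = xs ! k" and ki: "k \<le> i - 1" and kl: "k < length xs" by auto
    have "xs ! k \<le> xs ! (i-1)" using so ki il by (rule sorted_nth_mono)
    then have "a \<le> kth A i" using ak by (simp add: kth_def xs_def)
    moreover have "a \<in> A" using ak kl st nth_mem by blast
    ultimately show "a \<in> {a\<in>A. a \<le> kth A i}" by simp
  qed
  moreover have "card (set (take i xs)) = i" using dis len assms
    by (simp add: distinct_card)
  moreover have "finite {a\<in>A. a \<le> kth A i}" using assms(1) by simp
  ultimately show ?thesis using card_mono by metis
qed

lemma kth_L2: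
  assumes "finite A" "1 \<le> i" "i \<le> card A" "i \<le> card {a\<in>A. a \<le> v}"
  shows "kth A i \<le> v"
proof (rule ccontr)
  assume "\<not> kth A i \<le> v"
  then have lt: "v < kth A i" by simp
  define xs where "xs = sorted_list_of_set A"
  have len: "length xs = card A" and dis: "distinct xs" and so: "sorted xs" and st: "set xs = A"
    using assms(1) by (auto simp: xs_def)
  have "{a\<in>A. a \<le> v} \<subseteq> set (take (i-1) xs)"
  proof
    fix a assume a: "a \<in> {a\<in>A. a \<le> v}"
    then obtain k where k: "k < length xs" "a = xs ! k" using st by (auto simp: in_set_conv_nth)
    have "k < i - 1"
    proof (rule ccontr)
      assume "\<not> k < i - 1"
      then have "xs ! (i-1) \<le> xs ! k" using so k by (simp add: sorted_nth_mono)
      then show False using a k lt by (simp add: kth_def xs_def)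
    qed
    then show "a \<in> set (take (i-1) xs)" using k by (auto simp: in_set_conv_nth intro!: exI[of _ k])
  qed
  then have "card {a\<in>A. a \<le> v} \<le> card (set (take (i-1) xs))" by (simp add: card_mono)
  also have "\<dots> \<le> i - 1" by (metis card_length length_take min.bounded_iff)
  finally show False using assms by simp
qed

lemma tri_card:
  assumes "finite S" "finite T" "preceq T S"
  shows "card (tri T S) = card S"
proof -
  define xs where "xs = sorted_list_of_set S"
  have len: "length xs = card S" using assms by (simp add: xs_def)
  have sw: "sorted_wrt (>) (rev xs)" by (simp add: xs_def sorted_wrt_rev)
  have "\<forall>k<length (rev xs). length (rev xs) - k \<le> card {a\<in>T. a < rev xs ! k}"
  proof (intro allI impI)
    fix k assume k: "k < length (rev xs)"
    define j where "j = card S - k"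
    have j: "1 \<le> j" "j \<le> card S" using k len j_def by auto
    have e: "rev xs ! k = kth S j" using k len by (simp add: rev_nth kth_def xs_def j_def)
    have lt: "kth T j < kth S j" using assms(3) j unfolding preceq_def by auto
    have "j \<le> card {a\<in>T. a \<le> kth T j}" using kth_L1[OF assms(2) j(1)] j assms(3)
      unfolding preceq_def by simp
    also have "\<dots> \<le> card {a\<in>T. a < kth S j}" using lt assms(2) by (intro card_mono) auto
    finally show "length (rev xs) - k \<le> card {a\<in>T. a < rev xs ! k}" using e len j_def by simp
  qed
  from pick_card[OF sw this] show ?thesis using len by (simp add: tri_def xs_def)
qed

theorem lemma4p11:
  fixes S T :: "nat set" and x :: nat
  assumes "finite S" and "finite T"
    and "\<forall>s\<in>S. 0 < s" and "\<forall>t\<in>T. 0 < t"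
    and "preceq T S"
    and "x \<in> T"
    and "preceq (T - {x}) S"
  shows "\<forall>i\<in>{1..card S}. kth (tri T S) i \<ge> kth (tri (T - {x}) S) i"
proof -
  define P where "P = tri T S"
  define Q where "Q = tri (T - {x}) S"
  have cP: "card P = card S" using tri_card assms P_def by simp
  have cQ: "card Q = card S" using tri_card assms Q_def by simp
  have fP: "finite P" "finite Q" using pick_finite by (auto simp: P_def Q_def tri_def)
  from pick_remove[OF assms(6), of "rev (sorted_list_of_set S)"]
  have cases: "Q = P - {x} \<or> (\<exists>y<x. y \<notin> P \<and> x \<in> P \<and> Q = insert y (P - {x}))"
    unfolding P_def Q_def tri_def by blast
  show ?thesis
  proof (cases "Q = P - {x}")
    case True
    have "x \<notin> P"
    proof
      assume xP: "x \<in> P" then have "card Q = card P - 1" using True fP by simp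
      moreover have "card P > 0" using fP xP card_gt_0_iff by blast
      ultimately show False using cP cQ by simp
    qed
    then have "Q = P" using True by auto
    then show ?thesis by (simp add: P_def Q_def)
  next
    case False
    then obtain y where y: "y < x" "y \<notin> P" "x \<in> P" "Q = insert y (P - {x})" using cases by blast
    have cnt: "card {a\<in>P. a \<le> v} \<le> card {a\<in>Q. a \<le> v}" for v
    proof (cases "x \<le> v")
      case True
      have "{a\<in>Q. a \<le> v} = insert y ({a\<in>P. a \<le> v} - {x})" using y True by auto
      moreover have "card (insert y ({a\<in>P. a \<le> v} - {x})) = card {a\<in>P. a \<le> v}"
      proof -
        have xin: "x \<in> {a\<in>P. a \<le> v}" using y True by simp
        have fi: "finite {a\<in>P. a \<le> v}" using fP by simp
        have "card {a\<in>P. a \<le> v} > 0" using fi xin card_gt_0_iff by blast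
        then show ?thesis using y fi xin by (simp add: card_Diff_singleton)
      qed
      ultimately show ?thesis by simp
    next
      case False
      have "{a\<in>P. a \<le> v} \<subseteq> {a\<in>Q. a \<le> v}" using y False by auto
      then show ?thesis using fP by (intro card_mono) auto
    qed
    show ?thesis
    proof
      fix i assume i: "i \<in> {1..card S}"
      have "i \<le> card {a\<in>P. a \<le> kth P i}" using kth_L1[OF fP(1)] i cP by simp
      also have "\<dots> \<le> card {a\<in>Q. a \<le> kth P i}" by (rule cnt)
      finally have "kth Q i \<le> kth P i" using kth_L2[OF fP(2)] i cQ by simp
      then show "kth (tri (T - {x}) S) i \<le> kth (tri T S) i" by (simp add: P_def Q_def)
    qed
  qed
qed

end
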